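(* Let $t\ge1$ and $D\ge1$ be integers. Let $X,Y$ be a section-pair having $3t$ pairwise-interlacing chords whose lengths all belong to an interval of size $D$. Then there are paths $P_1,\dots,P_t$ in $H(X,Y)$ between $x^{t}$ and $y^{t}$ such that $1\le |P_{i+1}|-|P_i|\le 2D$ for every $1\le i\le t-1$. In particular $|P_t|\ge |P_1|+t-1$.
   Context: A section-pair in a graph $G$ is a pair $X,Y$ of vertex-disjoint paths; the two endpoints of $X$ are designated its top $x^{t}$ and bottom $x^{b}$, and those of $Y$ its top $y^t$ and bottom $y^b$. For distinct $x_1,x_2\in X$, $x_1$ is above $x_2$ if $x_1$ is closer to $x^t$ along $X$ than $x_2$, otherwise below; similarly in $Y$. A chord is an edge of $G$ with one endpoint in $X$ and one in $Y$. $H(X,Y)$ is the graph with vertex set $V(X)\cup V(Y)$ whose edges are the edges of $X$, the edges of $Y$ and the chords. $|P|$ is the number of edges of a path $P$; $d_X(x_1,x_2)$ is the number of edges of the subpath of $X$ between $x_1,x_2$, similarly $d_Y$. The length of a chord $(x,y)$, $x\in X,y\in Y$, is $d_X(x^t,x)+d_Y(y^t,y)$. Two chords $(x_1,y_1),(x_2,y_2)$ with no common vertex are parallel if for some $i\in\{1,2\}$, $x_i$ is above $x_{3-i}$ and $y_i$ is above $y_{3-i}$; otherwise they are interlacing. An interval is a set of consecutive integers; its size is its number of elements. *)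

theory Defs
  imports Main
begin

definition graph :: "'a set \<Rightarrow> ('a \<Rightarrow> 'a \<Rightarrow> bool) \<Rightarrow> bool" where
  "graph V E \<longleftrightarrow> (\<forall>u v. E u v \<longrightarrow> E v u \<and> u \<noteq> v \<and> u \<in> V \<and> v \<in> V)"

definition is_path :: "'a set \<Rightarrow> ('a \<Rightarrow> 'a \<Rightarrow> bool) \<Rightarrow> 'a list \<Rightarrow> bool" where
  "is_path V E p \<longleftrightarrow> p \<noteq> [] \<and> distinct p \<and> set p \<subseteq> V \<and>
     (\<forall>i. Suc i < length p \<longrightarrow> E (p ! i) (p ! Suc i))"

definition path_len :: "'a list \<Rightarrow> nat" where
  "path_len p = length p - 1"

text \<open>Section-pair: two vertex-disjoint paths xs, ys of G; top = hd, bottom = last.\<close>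
definition section_pair :: "'a set \<Rightarrow> ('a \<Rightarrow> 'a \<Rightarrow> bool) \<Rightarrow> 'a list \<Rightarrow> 'a list \<Rightarrow> bool" where
  "section_pair V E xs ys \<longleftrightarrow> is_path V E xs \<and> is_path V E ys \<and> set xs \<inter> set ys = {}"

definition path_edge :: "'a list \<Rightarrow> 'a \<Rightarrow> 'a \<Rightarrow> bool" where
  "path_edge p u v \<longleftrightarrow> (\<exists>i. Suc i < length p \<and>
      ((p ! i = u \<and> p ! Suc i = v) \<or> (p ! i = v \<and> p ! Suc i = u)))"

definition is_chord :: "('a \<Rightarrow> 'a \<Rightarrow> bool) \<Rightarrow> 'a list \<Rightarrow> 'a list \<Rightarrow> 'a \<times> 'a \<Rightarrow> bool" where
  "is_chord E xs ys c \<longleftrightarrow> fst c \<in> set xs \<and> snd c \<in> set ys \<and> E (fst c) (snd c)"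

definition H_adj :: "('a \<Rightarrow> 'a \<Rightarrow> bool) \<Rightarrow> 'a list \<Rightarrow> 'a list \<Rightarrow> 'a \<Rightarrow> 'a \<Rightarrow> bool" where
  "H_adj E xs ys u v \<longleftrightarrow> path_edge xs u v \<or> path_edge ys u v \<or>
      is_chord E xs ys (u, v) \<or> is_chord E xs ys (v, u)"

definition H_verts :: "'a list \<Rightarrow> 'a list \<Rightarrow> 'a set" where
  "H_verts xs ys = set xs \<union> set ys"

definition pos :: "'a list \<Rightarrow> 'a \<Rightarrow> nat" where
  "pos p a = (LEAST i. i < length p \<and> p ! i = a)"

text \<open>Length of a chord (x,y): d_X(x^t,x) + d_Y(y^t,y); with tops hd xs, hd ys
these distances are the list indices.\<close>
definition chord_length :: "'a list \<Rightarrow> 'a list \<Rightarrow> 'a \<times> 'a \<Rightarrow> nat" where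
  "chord_length xs ys c = pos xs (fst c) + pos ys (snd c)"

definition above :: "'a list \<Rightarrow> 'a \<Rightarrow> 'a \<Rightarrow> bool" where
  "above p a b \<longleftrightarrow> a \<in> set p \<and> b \<in> set p \<and> a \<noteq> b \<and> pos p a < pos p b"

definition parallel :: "'a list \<Rightarrow> 'a list \<Rightarrow> 'a \<times> 'a \<Rightarrow> 'a \<times> 'a \<Rightarrow> bool" where
  "parallel xs ys c1 c2 \<longleftrightarrow>
     (above xs (fst c1) (fst c2) \<and> above ys (snd c1) (snd c2)) \<or>
     (above xs (fst c2) (fst c1) \<and> above ys (snd c2) (snd c1))"

definition interlacing :: "'a list \<Rightarrow> 'a list \<Rightarrow> 'a \<times> 'a \<Rightarrow> 'a \<times> 'a \<Rightarrow> bool" where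
  "interlacing xs ys c1 c2 \<longleftrightarrow>
     fst c1 \<noteq> fst c2 \<and> snd c1 \<noteq> snd c2 \<and> \<not> parallel xs ys c1 c2"

end

theory Submission
  imports Defs "HOL-Library.Product_Lexorder"
begin


definition Rc :: "nat\<times>nat \<Rightarrow> nat\<times>nat \<Rightarrow> bool" where
  "Rc c d \<longleftrightarrow> fst c < fst d \<and> snd d < snd c"

definition Lc :: "nat\<times>nat \<Rightarrow> int" where "Lc c = int (fst c + snd c)"

fun alt :: "(nat\<times>nat) list \<Rightarrow> int" where
  "alt [] = 0"
| "alt (c#cs) = Lc c - alt cs"

definition val :: "bool \<Rightarrow> (nat\<times>nat) list \<Rightarrow> int" where
  "val par q = (if par then - alt q else alt q) + int (length q)"

lemma alt_append: "alt (u @ v) = alt u + (if odd (length u) then - alt v else alt v)"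
  by (induction u) auto

lemma val_append: "val par (u @ v) = val par u + val (par \<noteq> odd (length u)) v"
  unfolding val_def by (auto simp: alt_append)

lemma triple_choice:
  fixes x y z :: "nat\<times>nat"
  assumes "Rc x y" "Rc y z" "Rc x z"
    and W: "\<forall>c\<in>{x,y,z}. Lc c \<in> {\<alpha>..<\<alpha>+int D}" and "D \<ge> 1"
  shows "\<exists>s p q. sorted_wrt Rc (s@[p,q]) \<and> set (s@[p,q]) \<subseteq> {x,y,z} \<and>
     1 \<le> val (par \<noteq> odd (length s)) [p,q] \<and> val (par \<noteq> odd (length s)) [p,q] \<le> 2 * int D"
proof -
  have v: "val b [p,q] = (if b then Lc q - Lc p else Lc p - Lc q) + 2" for b p q
    by (simp add: val_def)
  from W have bx: "\<alpha> \<le> Lc x" "Lc x < \<alpha> + int D" "\<alpha> \<le> Lc y" "Lc y < \<alpha> + int D"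
      "\<alpha> \<le> Lc z" "Lc z < \<alpha> + int D" by auto
  show ?thesis
  proof (cases par)
    case True
    show ?thesis
    proof (cases "Lc x - Lc y \<le> 1")
      case True
      thus ?thesis using \<open>par\<close> assms bx
        by (intro exI[of _ "[]"] exI[of _ x] exI[of _ y]) (auto simp: v)
    next
      case c1: False
      show ?thesis
      proof (cases "Lc y - Lc z \<le> 1")
        case True
        thus ?thesis using \<open>par\<close> assms bx
          by (intro exI[of _ "[]"] exI[of _ y] exI[of _ z]) (auto simp: v)
      next
        case False
        thus ?thesis using \<open>par\<close> assms bx
          by (intro exI[of _ "[x]"] exI[of _ y] exI[of _ z]) (auto simp: v)
      qed
    qed
  next
    case False
    show ?thesis
    proof (cases "Lc x - Lc y \<ge> -1")
      case True
      thus ?thesis using \<open>\<not>par\<close> assms bx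
        by (intro exI[of _ "[]"] exI[of _ x] exI[of _ y]) (auto simp: v)
    next
      case c1: False
      show ?thesis
      proof (cases "Lc y - Lc z \<ge> -1")
        case True
        thus ?thesis using \<open>\<not>par\<close> assms bx
          by (intro exI[of _ "[]"] exI[of _ y] exI[of _ z]) (auto simp: v)
      next
        case False
        thus ?thesis using \<open>\<not>par\<close> assms bx
          by (intro exI[of _ "[x]"] exI[of _ y] exI[of _ z]) (auto simp: v)
      qed
    qed
  qed
qed

lemma comb:
  assumes "sorted_wrt Rc ks" "length ks \<ge> 3*k+1" "\<forall>c\<in>set ks. Lc c \<in> {\<alpha>..<\<alpha>+int D}" "D \<ge> 1"
  shows "\<exists>Q. (\<forall>m\<le>k. sorted_wrt Rc (Q m) \<and> set (Q m) \<subseteq> set ks \<and> (odd (length (Q m)) \<longleftrightarrow> \<not>par))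
      \<and> (\<forall>m<k. 1 \<le> val par (Q (Suc m)) - val par (Q m) \<and> val par (Q (Suc m)) - val par (Q m) \<le> 2 * int D)"
  using assms
proof (induction k arbitrary: ks par)
  case 0
  then obtain x r where ks: "ks = x # r" by (cases ks) auto
  show ?case
    by (rule exI[of _ "\<lambda>m. if par then [] else [x]"]) (auto simp: ks)
next
  case (Suc k)
  then obtain x y z rest where ks: "ks = x # y # z # rest"
    by (cases ks; cases "tl ks"; cases "tl (tl ks)") auto
  have so: "sorted_wrt Rc ks" by fact
  hence rxyz: "Rc x y" "Rc y z" "Rc x z" by (auto simp: ks)
  obtain s p q where spq: "sorted_wrt Rc (s@[p,q])" "set (s@[p,q]) \<subseteq> {x,y,z}"
    "1 \<le> val (par \<noteq> odd (length s)) [p,q]" "val (par \<noteq> odd (length s)) [p,q] \<le> 2 * int D"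
    using triple_choice[OF rxyz, of \<alpha> D par] Suc.prems(3,4) by (auto simp: ks)
  define par' where "par' = (par \<noteq> odd (length s))"
  have "sorted_wrt Rc rest" "length rest \<ge> 3*k+1" "\<forall>c\<in>set rest. Lc c \<in> {\<alpha>..<\<alpha>+int D}"
    using Suc.prems by (auto simp: ks)
  from Suc.IH[OF this Suc.prems(4), of par'] obtain Q' where
    Q': "\<forall>m\<le>k. sorted_wrt Rc (Q' m) \<and> set (Q' m) \<subseteq> set rest \<and> (odd (length (Q' m)) \<longleftrightarrow> \<not>par')"
        "\<forall>m<k. 1 \<le> val par' (Q' (Suc m)) - val par' (Q' m) \<and> val par' (Q' (Suc m)) - val par' (Q' m) \<le> 2 * int D"
    by blast
  define Q where "Q m = (if m = 0 then s @ Q' 0 else s @ [p,q] @ Q' (m-1))" for m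
  have lt: "\<forall>u\<in>{x,y,z}. \<forall>v\<in>set rest. Rc u v" using so by (auto simp: ks)
  have A: "sorted_wrt Rc (Q m) \<and> set (Q m) \<subseteq> set ks \<and> (odd (length (Q m)) \<longleftrightarrow> \<not>par)" if "m \<le> Suc k" for m
  proof -
    have h: "sorted_wrt Rc (Q' (m-1)) \<and> set (Q' (m-1)) \<subseteq> set rest \<and> (odd (length (Q' (m-1))) \<longleftrightarrow> \<not>par')"
      "sorted_wrt Rc (Q' 0) \<and> set (Q' 0) \<subseteq> set rest \<and> (odd (length (Q' 0)) \<longleftrightarrow> \<not>par')"
      using Q'(1) that by auto
    have ss: "sorted_wrt Rc s" "set s \<subseteq> {x,y,z}" using spq by (auto simp: sorted_wrt_append)
    show ?thesis
    proof (cases "m = 0")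
      case True
      have "sorted_wrt Rc (s @ Q' 0)"
        unfolding sorted_wrt_append using ss h(2) lt by (meson insert_iff subsetD)
      moreover have "set (s @ Q' 0) \<subseteq> set ks" using ss h(2) by (auto simp: ks)
      ultimately show ?thesis using True h(2) unfolding Q_def par'_def by auto
    next
      case False
      have "sorted_wrt Rc ((s @ [p,q]) @ Q' (m-1))"
        unfolding sorted_wrt_append[of _ "s @ [p,q]"] using spq(1,2) h(1) lt by (meson insert_iff subsetD)
      moreover have "set ((s @ [p,q]) @ Q' (m-1)) \<subseteq> set ks" using spq h(1) by (auto simp: ks)
      ultimately show ?thesis using False h(1) unfolding Q_def par'_def by auto
    qed
  qed
  have B: "1 \<le> val par (Q (Suc m)) - val par (Q m) \<and> val par (Q (Suc m)) - val par (Q m) \<le> 2 * int D"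
    if "m < Suc k" for m
  proof (cases m)
    case 0
    have "val par (Q (Suc m)) - val par (Q m) = val par' [p,q]"
      unfolding Q_def 0 using val_append[of par s "[p,q] @ Q' 0"] val_append[of par s "Q' 0"]
        val_append[of par' "[p,q]" "Q' 0"] by (simp add: par'_def)
    then show ?thesis using spq par'_def by simp
  next
    case (Suc m')
    have "val par (Q (Suc m)) - val par (Q m) = val par' (Q' (Suc m')) - val par' (Q' m')"
      unfolding Q_def Suc using val_append[of par "s @ [p,q]" "Q' (Suc m')"] val_append[of par "s @ [p,q]" "Q' m'"]
      by (simp add: par'_def)
    then show ?thesis using Q'(2) that Suc by auto
  qed
  show ?case using A B by blast
qed



lemma is_path_append:
  assumes "is_path V E p" "is_path V E q" "set p \<inter> set q = {}" "E (last p) (hd q)"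
  shows "is_path V E (p @ q)"
  unfolding is_path_def
proof (intro conjI allI impI)
  show "p @ q \<noteq> []" using assms(1) by (simp add: is_path_def)
  show "distinct (p @ q)" using assms by (simp add: is_path_def)
  show "set (p @ q) \<subseteq> V" using assms by (simp add: is_path_def)
  fix i assume i: "Suc i < length (p @ q)"
  have pne: "p \<noteq> []" "q \<noteq> []" using assms by (auto simp: is_path_def)
  consider "Suc i < length p" | "Suc i = length p" | "Suc i > length p" by linarith
  then show "E ((p @ q) ! i) ((p @ q) ! Suc i)"
  proof cases
    case 1 thus ?thesis using assms(1) by (simp add: is_path_def nth_append)
  next
    case 2 then have "i = length p - 1" by simp
    thus ?thesis using assms(4) pne
      by (simp add: nth_append last_conv_nth hd_conv_nth)
  next
    case 3
    then have "Suc (i - length p) < length q" "Suc i - length p = Suc (i - length p)" using i by auto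
    thus ?thesis using assms(2) 3 by (simp add: is_path_def nth_append)
  qed
qed

lemma is_path_single: "v \<in> V \<Longrightarrow> is_path V E [v]"
  by (simp add: is_path_def)

lemma xseg_path:
  assumes "distinct xs" "i \<le> j" "j < length xs"
  shows "is_path (H_verts xs ys) (H_adj E xs ys) (map ((!) xs) [i..<Suc j])"
  unfolding is_path_def
proof (intro conjI allI impI)
  show "map ((!) xs) [i..<Suc j] \<noteq> []" using assms by simp
  show "distinct (map ((!) xs) [i..<Suc j])" using assms
    by (subst distinct_map) (auto simp: inj_on_def nth_eq_iff_index_eq)
  show "set (map ((!) xs) [i..<Suc j]) \<subseteq> H_verts xs ys" using assms by (auto simp: H_verts_def)
  fix k assume k: "Suc k < length (map ((!) xs) [i..<Suc j])"
  then have "Suc (i + k) < length xs" using assms by (simp del: upt_Suc)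
  then show "H_adj E xs ys (map ((!) xs) [i..<Suc j] ! k) (map ((!) xs) [i..<Suc j] ! Suc k)"
    using k unfolding H_adj_def path_edge_def
    by (intro disjI1 exI[of _ "i+k"]) (simp del: upt_Suc)
qed

lemma yseg_path:
  assumes "distinct ys" "j \<le> i" "i < length ys"
  shows "is_path (H_verts xs ys) (H_adj E xs ys) (map ((!) ys) (rev [j..<Suc i]))"
  unfolding is_path_def
proof (intro conjI allI impI)
  show "map ((!) ys) (rev [j..<Suc i]) \<noteq> []" using assms by simp
  show "distinct (map ((!) ys) (rev [j..<Suc i]))" using assms
    by (subst distinct_map) (auto simp: inj_on_def nth_eq_iff_index_eq)
  show "set (map ((!) ys) (rev [j..<Suc i])) \<subseteq> H_verts xs ys" using assms by (auto simp: H_verts_def)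
  fix k assume k: "Suc k < length (map ((!) ys) (rev [j..<Suc i]))"
  then have k': "Suc k \<le> i - j" by (simp del: upt_Suc)
  have e1: "map ((!) ys) (rev [j..<Suc i]) ! k = ys ! (i - k)"
    using k' by (simp add: rev_nth del: upt_Suc)
  have e2: "map ((!) ys) (rev [j..<Suc i]) ! Suc k = ys ! (i - Suc k)"
    using k' by (simp add: rev_nth del: upt_Suc)
  have "Suc (i - Suc k) < length ys" "Suc (i - Suc k) = i - k" using k' assms by auto
  then show "H_adj E xs ys (map ((!) ys) (rev [j..<Suc i]) ! k) (map ((!) ys) (rev [j..<Suc i]) ! Suc k)"
    unfolding e1 e2 H_adj_def path_edge_def
    by (intro disjI2 disjI1 exI[of _ "i - Suc k"]) auto
qed

fun zz :: "'a list \<Rightarrow> 'a list \<Rightarrow> bool \<Rightarrow> nat \<Rightarrow> (nat\<times>nat) list \<Rightarrow> 'a list" where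
  "zz xs ys True s (c#cs) = map ((!) xs) [s..<Suc (fst c)] @ zz xs ys False (snd c) cs"
| "zz xs ys False s (c#cs) = map ((!) ys) (rev [snd c..<Suc s]) @ zz xs ys True (fst c) cs"
| "zz xs ys False s [] = map ((!) ys) (rev [0..<Suc s])"
| "zz xs ys True s [] = []"

definition okc :: "('a \<Rightarrow> 'a \<Rightarrow> bool) \<Rightarrow> 'a list \<Rightarrow> 'a list \<Rightarrow> (nat\<times>nat) list \<Rightarrow> bool" where
  "okc E xs ys cs \<longleftrightarrow> sorted_wrt Rc cs \<and>
     (\<forall>c\<in>set cs. fst c < length xs \<and> snd c < length ys \<and> E (xs ! fst c) (ys ! snd c))"

lemma hd_last_seg:
  "j \<le> i \<Longrightarrow> hd (map f [j..<Suc i]) = f j"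
  "j \<le> i \<Longrightarrow> last (map f [j..<Suc i]) = f i"
  "j \<le> i \<Longrightarrow> hd (map f (rev [j..<Suc i])) = f i"
  "j \<le> i \<Longrightarrow> last (map f (rev [j..<Suc i])) = f j"
  by (simp_all add: hd_map last_map hd_rev last_rev del: upt_Suc)

lemma zz_main:
  assumes dx: "distinct xs" and dy: "distinct ys" and dxy: "set xs \<inter> set ys = {}"
  shows "okc E xs ys cs \<Longrightarrow>
   (\<forall>s. odd (length cs) \<and> s \<le> fst (hd cs) \<longrightarrow>
      is_path (H_verts xs ys) (H_adj E xs ys) (zz xs ys True s cs) \<and>
      hd (zz xs ys True s cs) = xs ! s \<and> last (zz xs ys True s cs) = ys ! 0 \<and>
      int (length (zz xs ys True s cs)) = alt cs - int s + int (length cs) + 1 \<and>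
      (\<forall>hi. (\<forall>c\<in>set cs. snd c \<le> hi) \<longrightarrow>
          set (zz xs ys True s cs) \<subseteq> (!) xs ` {s..<length xs} \<union> (!) ys ` {..hi}))
 \<and> (\<forall>s. even (length cs) \<and> s < length ys \<and> (\<forall>c\<in>set cs. snd c \<le> s) \<longrightarrow>
      is_path (H_verts xs ys) (H_adj E xs ys) (zz xs ys False s cs) \<and>
      hd (zz xs ys False s cs) = ys ! s \<and> last (zz xs ys False s cs) = ys ! 0 \<and>
      int (length (zz xs ys False s cs)) = int s - alt cs + int (length cs) + 1 \<and>
      (\<forall>lo. (\<forall>c\<in>set cs. lo \<le> fst c) \<longrightarrow>
          set (zz xs ys False s cs) \<subseteq> (!) xs ` {lo..<length xs} \<union> (!) ys ` {..s}))"
proof (induction cs)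
  case Nil
  show ?case
  proof (intro conjI allI impI)
    fix s assume "even (length ([]::(nat\<times>nat) list)) \<and> s < length ys \<and> (\<forall>c\<in>set []. snd c \<le> s)"
    then have s: "s < length ys" by simp
    show "is_path (H_verts xs ys) (H_adj E xs ys) (zz xs ys False s [])"
      using yseg_path[OF dy _ s, of 0] by simp
    show "hd (zz xs ys False s []) = ys ! s" using hd_last_seg(3)[of 0 s] by (simp del: upt_Suc)
    show "last (zz xs ys False s []) = ys ! 0" using hd_last_seg(4)[of 0 s] by (simp del: upt_Suc)
    show "int (length (zz xs ys False s [])) = int s - alt [] + int (length []) + 1" by simp
    fix lo show "set (zz xs ys False s []) \<subseteq> (!) xs ` {lo..<length xs} \<union> (!) ys ` {..s}"
      by (auto simp del: upt_Suc)
  qed auto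
next
  case (Cons c cs')
  obtain a b where c: "c = (a,b)" by (cases c)
  have ok': "okc E xs ys cs'" using Cons.prems by (simp add: okc_def)
  note IH = Cons.IH[OF ok']
  have ca: "a < length xs" "b < length ys" "E (xs ! a) (ys ! b)"
    using Cons.prems by (auto simp: okc_def c)
  have srt: "\<forall>c'\<in>set cs'. a < fst c' \<and> snd c' < b"
    using Cons.prems by (auto simp: okc_def c Rc_def)
  have disjX: "xs ! i \<noteq> ys ! j" if "i < length xs" "j < length ys" for i j
    using dxy that by (metis disjoint_iff nth_mem)
  show ?case
  proof (intro conjI allI impI)
    fix s assume as: "odd (length (c # cs')) \<and> s \<le> fst (hd (c # cs'))"
    then have sa: "s \<le> a" and ev: "even (length cs')" by (auto simp: c)
    have "even (length cs') \<and> b < length ys \<and> (\<forall>c\<in>set cs'. snd c \<le> b)"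
      using ev ca srt by auto
    with IH have F: "is_path (H_verts xs ys) (H_adj E xs ys) (zz xs ys False b cs')"
      "hd (zz xs ys False b cs') = ys ! b" "last (zz xs ys False b cs') = ys ! 0"
      "int (length (zz xs ys False b cs')) = int b - alt cs' + int (length cs') + 1"
      "set (zz xs ys False b cs') \<subseteq> (!) xs ` {Suc a..<length xs} \<union> (!) ys ` {..b}"
      using srt by (auto simp: Suc_le_eq)
    define S where "S = map ((!) xs) [s..<Suc a]"
    have eq: "zz xs ys True s (c # cs') = S @ zz xs ys False b cs'" by (simp add: S_def c)
    have Sp: "is_path (H_verts xs ys) (H_adj E xs ys) S" unfolding S_def by (rule xseg_path[OF dx sa ca(1)])
    have Sset: "set S \<subseteq> (!) xs ` {s..a}" unfolding S_def by (auto simp del: upt_Suc)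
    have Zne: "zz xs ys False b cs' \<noteq> []" using F(1) by (simp add: is_path_def)
    have disj: "set S \<inter> set (zz xs ys False b cs') = {}"
    proof -
      { fix v assume v1: "v \<in> set S" and v2: "v \<in> set (zz xs ys False b cs')"
        from v1 Sset have "v \<in> (!) xs ` {s..a}" by blast
        then obtain i where i: "s \<le> i" "i \<le> a" "v = xs ! i" by auto
        from v2 F(5) have "v \<in> (!) xs ` {Suc a..<length xs} \<union> (!) ys ` {..b}" by blast
        then have "(\<exists>i'. Suc a \<le> i' \<and> i' < length xs \<and> v = xs ! i') \<or> (\<exists>j. j \<le> b \<and> v = ys ! j)"
          by auto
        then have False
        proof
          assume "\<exists>i'. Suc a \<le> i' \<and> i' < length xs \<and> v = xs ! i'"
          then obtain i' where "Suc a \<le> i'" "i' < length xs" "v = xs ! i'" by blast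
          with i ca dx show False by (simp add: nth_eq_iff_index_eq)
        next
          assume "\<exists>j. j \<le> b \<and> v = ys ! j"
          then obtain j where "j \<le> b" "v = ys ! j" by blast
          with i ca disjX[of i j] show False by auto
        qed }
      thus ?thesis by blast
    qed
    have edge: "H_adj E xs ys (last S) (hd (zz xs ys False b cs'))"
      unfolding F(2) S_def hd_last_seg(2)[OF sa] H_adj_def is_chord_def using ca by auto
    show "is_path (H_verts xs ys) (H_adj E xs ys) (zz xs ys True s (c # cs'))"
      unfolding eq by (rule is_path_append[OF Sp F(1) disj edge])
    show "hd (zz xs ys True s (c # cs')) = xs ! s"
      unfolding eq S_def using sa by (simp add: hd_last_seg(1) del: upt_Suc)
    show "last (zz xs ys True s (c # cs')) = ys ! 0" unfolding eq using Zne F(3) by simp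
    show "int (length (zz xs ys True s (c # cs'))) = alt (c # cs') - int s + int (length (c # cs')) + 1"
      unfolding eq S_def using F(4) sa by (simp add: c Lc_def del: upt_Suc)
    fix hi assume "\<forall>c\<in>set (c # cs'). snd c \<le> hi"
    then have "b \<le> hi" by (simp add: c)
    then show "set (zz xs ys True s (c # cs')) \<subseteq> (!) xs ` {s..<length xs} \<union> (!) ys ` {..hi}"
      unfolding eq using Sset F(5) sa ca(1) by fastforce
  next
    fix s assume as: "even (length (c # cs')) \<and> s < length ys \<and> (\<forall>c\<in>set (c # cs'). snd c \<le> s)"
    then have bs: "b \<le> s" and od: "odd (length cs')" and sl: "s < length ys" by (auto simp: c)
    then obtain c2 cs2 where cs2: "cs' = c2 # cs2" by (cases cs') auto
    have b1: "\<forall>c\<in>set cs'. snd c \<le> b - 1" using srt by fastforce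
    have "odd (length cs') \<and> a \<le> fst (hd cs')" using od srt cs2 by auto
    with IH have T: "is_path (H_verts xs ys) (H_adj E xs ys) (zz xs ys True a cs')"
      "hd (zz xs ys True a cs') = xs ! a" "last (zz xs ys True a cs') = ys ! 0"
      "int (length (zz xs ys True a cs')) = alt cs' - int a + int (length cs') + 1"
      "set (zz xs ys True a cs') \<subseteq> (!) xs ` {a..<length xs} \<union> (!) ys ` {..b - 1}"
      using b1 by auto
    have b0: "0 < b" using srt cs2 by auto
    define Y where "Y = map ((!) ys) (rev [b..<Suc s])"
    have eq: "zz xs ys False s (c # cs') = Y @ zz xs ys True a cs'" by (simp add: Y_def c)
    have Yp: "is_path (H_verts xs ys) (H_adj E xs ys) Y" unfolding Y_def by (rule yseg_path[OF dy bs sl])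
    have Yset: "set Y \<subseteq> (!) ys ` {b..s}" unfolding Y_def by (auto simp del: upt_Suc)
    have Tne: "zz xs ys True a cs' \<noteq> []" using T(1) by (simp add: is_path_def)
    have disj: "set Y \<inter> set (zz xs ys True a cs') = {}"
    proof -
      { fix v assume v1: "v \<in> set Y" and v2: "v \<in> set (zz xs ys True a cs')"
        from v1 Yset have "v \<in> (!) ys ` {b..s}" by blast
        then obtain j where j: "b \<le> j" "j \<le> s" "v = ys ! j" by auto
        from v2 T(5) have "v \<in> (!) xs ` {a..<length xs} \<union> (!) ys ` {..b - 1}" by blast
        then have "(\<exists>i'. i' < length xs \<and> v = xs ! i') \<or> (\<exists>j'. j' \<le> b - 1 \<and> v = ys ! j')"
          by auto
        then have False
        proof
          assume "\<exists>i'. i' < length xs \<and> v = xs ! i'"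
          then obtain i' where "i' < length xs" "v = xs ! i'" by blast
          with j sl disjX[of i' j] show False by auto
        next
          assume "\<exists>j'. j' \<le> b - 1 \<and> v = ys ! j'"
          then obtain j' where "j' \<le> b - 1" "v = ys ! j'" by blast
          with j sl b0 dy show False by (simp add: nth_eq_iff_index_eq)
        qed }
      thus ?thesis by blast
    qed
    have edge: "H_adj E xs ys (last Y) (hd (zz xs ys True a cs'))"
      unfolding T(2) Y_def hd_last_seg(4)[OF bs] H_adj_def is_chord_def using ca by auto
    show "is_path (H_verts xs ys) (H_adj E xs ys) (zz xs ys False s (c # cs'))"
      unfolding eq by (rule is_path_append[OF Yp T(1) disj edge])
    show "hd (zz xs ys False s (c # cs')) = ys ! s"
      unfolding eq Y_def using bs by (simp add: hd_last_seg(3) del: upt_Suc)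
    show "last (zz xs ys False s (c # cs')) = ys ! 0" unfolding eq using Tne T(3) by simp
    show "int (length (zz xs ys False s (c # cs'))) = int s - alt (c # cs') + int (length (c # cs')) + 1"
      unfolding eq Y_def using T(4) bs by (simp add: c Lc_def del: upt_Suc)
    fix lo assume "\<forall>c\<in>set (c # cs'). lo \<le> fst c"
    then have "lo \<le> a" by (simp add: c)
    then show "set (zz xs ys False s (c # cs')) \<subseteq> (!) xs ` {lo..<length xs} \<union> (!) ys ` {..s}"
      unfolding eq using Yset T(5) bs b0 by fastforce
  qed
qed



lemma pos_nth: "distinct p \<Longrightarrow> i < length p \<Longrightarrow> pos p (p ! i) = i"
  unfolding pos_def by (rule Least_equality) (auto simp: nth_eq_iff_index_eq)

lemma pos_mem: assumes "v \<in> set p" shows "pos p v < length p" "p ! pos p v = v"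
proof -
  from assms obtain i where "i < length p" "p ! i = v" by (auto simp: in_set_conv_nth)
  hence "\<exists>i. i < length p \<and> p ! i = v" by blast
  from LeastI_ex[OF this] show "pos p v < length p" "p ! pos p v = v" unfolding pos_def by auto
qed

theorem lemma4p4:
  fixes V :: "'a set" and E :: "'a \<Rightarrow> 'a \<Rightarrow> bool" and xs ys :: "'a list"
    and C :: "('a \<times> 'a) set" and t D :: nat
  assumes "graph V E"
    and "section_pair V E xs ys"
    and "t \<ge> 1" and "D \<ge> 1"
    and "finite C" and "card C = 3 * t"
    and "\<forall>c\<in>C. is_chord E xs ys c"
    and "\<forall>c1\<in>C. \<forall>c2\<in>C. c1 \<noteq> c2 \<longrightarrow> interlacing xs ys c1 c2"
    and "\<exists>a. \<forall>c\<in>C. chord_length xs ys c \<in> {a..<a + D}"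
  shows "\<exists>P :: nat \<Rightarrow> 'a list.
           (\<forall>i\<in>{1..t}. is_path (H_verts xs ys) (H_adj E xs ys) (P i)
                         \<and> hd (P i) = hd xs \<and> last (P i) = hd ys)
         \<and> (\<forall>i\<in>{1..<t}. 1 \<le> int (path_len (P (Suc i))) - int (path_len (P i))
                        \<and> int (path_len (P (Suc i))) - int (path_len (P i)) \<le> 2 * int D)
         \<and> path_len (P t) \<ge> path_len (P 1) + t - 1"
proof -
  have px: "is_path V E xs" and py: "is_path V E ys" and dxy: "set xs \<inter> set ys = {}"
    using assms(2) by (auto simp: section_pair_def)
  have dx: "distinct xs" "xs \<noteq> []" and dy: "distinct ys" "ys \<noteq> []"
    using px py by (auto simp: is_path_def)
  define f where "f c = (pos xs (fst c), pos ys (snd c))" for c :: "'a \<times> 'a"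
  have ch: "fst c \<in> set xs" "snd c \<in> set ys" "E (fst c) (snd c)" if "c \<in> C" for c
    using assms(7) that by (auto simp: is_chord_def)
  have inter: "fst c1 \<noteq> fst c2" "snd c1 \<noteq> snd c2" "\<not> parallel xs ys c1 c2"
    if "c1 \<in> C" "c2 \<in> C" "c1 \<noteq> c2" for c1 c2
    using assms(8) that by (auto simp: interlacing_def)
  have posinj: "pos p u = pos p v \<Longrightarrow> u \<in> set p \<Longrightarrow> v \<in> set p \<Longrightarrow> u = v" for p and u v :: 'a
    by (metis pos_mem(2))
  have inj: "inj_on f C"
  proof
    fix c1 c2 assume "c1 \<in> C" "c2 \<in> C" "f c1 = f c2"
    thus "c1 = c2" using inter(1)[of c1 c2] ch posinj[of xs "fst c1" "fst c2"] by (auto simp: f_def)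
  qed
  define K where "K = f ` C"
  have finK: "finite K" and cardK: "card K = 3 * t"
    using assms(5,6) card_image[OF inj] by (auto simp: K_def)
  define ks where "ks = sorted_list_of_set K"
  have setks: "set ks = K" and lenks: "length ks = 3 * t" using finK cardK by (auto simp: ks_def)
  have Rcf: "Rc (f c1) (f c2)" if "c1 \<in> C" "c2 \<in> C" "f c1 < f c2" for c1 c2
  proof -
    have ne: "c1 \<noteq> c2" using that by auto
    have a12: "pos xs (fst c1) \<noteq> pos xs (fst c2)"
      using posinj[of xs "fst c1" "fst c2"] inter(1)[OF that(1,2) ne] ch that by auto
    have alt: "pos xs (fst c1) < pos xs (fst c2)" using that(3) a12 by (auto simp: f_def)
    have b12: "pos ys (snd c1) \<noteq> pos ys (snd c2)"
      using posinj[of ys "snd c1" "snd c2"] inter(2)[OF that(1,2) ne] ch that by auto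
    have "above xs (fst c1) (fst c2)" using alt inter(1)[OF that(1,2) ne] ch that by (auto simp: above_def)
    with inter(3)[OF that(1,2) ne] have "\<not> above ys (snd c1) (snd c2)" by (auto simp: parallel_def)
    hence "pos ys (snd c2) < pos ys (snd c1)" using b12 inter(2)[OF that(1,2) ne] ch that
      by (auto simp: above_def)
    thus ?thesis using alt by (simp add: Rc_def f_def)
  qed
  have sks: "sorted_wrt Rc ks"
  proof (rule sorted_wrt_mono_rel[of ks "(<)"])
    show "sorted_wrt (<) ks" unfolding ks_def by (rule strict_sorted_list_of_set)
    fix x y assume "x \<in> set ks" "y \<in> set ks" "x < y"
    then obtain c1 c2 where "c1 \<in> C" "c2 \<in> C" "x = f c1" "y = f c2"
      unfolding setks K_def by blast
    thus "Rc x y" using Rcf \<open>x < y\<close> by blast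
  qed
  have okks: "okc E xs ys ks"
    unfolding okc_def
  proof (rule conjI[OF sks], rule ballI)
    fix k assume "k \<in> set ks"
    then obtain c where c: "c \<in> C" "k = f c" using setks K_def by auto
    show "fst k < length xs \<and> snd k < length ys \<and> E (xs ! fst k) (ys ! snd k)"
      using c ch[OF c(1)] pos_mem[of "fst c" xs] pos_mem[of "snd c" ys] by (auto simp: f_def)
  qed
  obtain \<alpha> where al: "\<forall>c\<in>C. chord_length xs ys c \<in> {\<alpha>..<\<alpha> + D}" using assms(9) by blast
  have win: "\<forall>c\<in>set ks. Lc c \<in> {int \<alpha>..<int \<alpha> + int D}"
  proof
    fix k assume "k \<in> set ks"
    then obtain c where c: "c \<in> C" "k = f c" using setks K_def by auto
    thus "Lc k \<in> {int \<alpha>..<int \<alpha> + int D}" using al by (auto simp: Lc_def f_def chord_length_def)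
  qed
  have "length ks \<ge> 3 * (t - 1) + 1" using lenks assms(3) by simp
  from comb[OF sks this win assms(4), of False] obtain Q where
    Q: "\<forall>m\<le>t-1. sorted_wrt Rc (Q m) \<and> set (Q m) \<subseteq> set ks \<and> odd (length (Q m))"
       "\<forall>m<t-1. 1 \<le> val False (Q (Suc m)) - val False (Q m) \<and> val False (Q (Suc m)) - val False (Q m) \<le> 2 * int D"
    by auto
  define P where "P i = zz xs ys True 0 (Q (i - 1))" for i
  have PP: "is_path (H_verts xs ys) (H_adj E xs ys) (P i) \<and> hd (P i) = hd xs \<and> last (P i) = hd ys
        \<and> int (path_len (P i)) = val False (Q (i - 1))" if "i \<in> {1..t}" for i
  proof -
    have q: "sorted_wrt Rc (Q (i-1))" "set (Q (i-1)) \<subseteq> set ks" "odd (length (Q (i-1)))"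
      using Q(1) that by (meson atLeastAtMost_iff diff_le_mono)+
    have ok: "okc E xs ys (Q (i-1))" using okks q unfolding okc_def by blast
    from zz_main[OF dx(1) dy(1) dxy ok] q(3)
    have "is_path (H_verts xs ys) (H_adj E xs ys) (P i) \<and> hd (P i) = xs ! 0 \<and> last (P i) = ys ! 0 \<and>
      int (length (P i)) = alt (Q (i-1)) - int 0 + int (length (Q (i-1))) + 1"
      unfolding P_def by blast
    moreover have "length (P i) \<ge> 1" using calculation by (cases "P i") (auto simp: is_path_def)
    ultimately show ?thesis using dx(2) dy(2)
      by (auto simp: path_len_def val_def hd_conv_nth of_nat_diff)
  qed
  have inc: "1 \<le> int (path_len (P (Suc i))) - int (path_len (P i))
           \<and> int (path_len (P (Suc i))) - int (path_len (P i)) \<le> 2 * int D" if "i \<in> {1..<t}" for i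
  proof -
    have "Suc i \<in> {1..t}" "i \<in> {1..t}" using that by auto
    with PP have "int (path_len (P (Suc i))) = val False (Q i)" "int (path_len (P i)) = val False (Q (i-1))"
      by fastforce+
    moreover have "i - 1 < t - 1" "Suc (i-1) = i" using that by auto
    ultimately show ?thesis using Q(2) by metis
  qed
  have grow: "i \<in> {1..t} \<Longrightarrow> path_len (P i) \<ge> path_len (P 1) + (i - 1)" for i
  proof (induction i)
    case 0 thus ?case by simp
  next
    case (Suc i)
    show ?case
    proof (cases "i = 0")
      case True thus ?thesis by simp
    next
      case False
      hence "i \<in> {1..t}" "i \<in> {1..<t}" using Suc.prems by auto
      with Suc.IH inc[of i] show ?thesis by fastforce
    qed
  qed
  have "path_len (P t) \<ge> path_len (P 1) + (t - 1)" using grow assms(3) by auto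
  hence "path_len (P t) \<ge> path_len (P 1) + t - 1" using assms(3) by simp
  thus ?thesis using PP inc by blast
qed


end
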